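(* Let $d\ge1$ and $\beta>0$. There is $\kappa\in(0,1)$ depending only on $d,\beta$ such that, for all sufficiently small $\varepsilon\in(0,1)$ (depending only on $d,\beta$), with $K$ and $\xi_i$ as in the context, $$\mathbb{P}\Big[\sum_{i=1}^K\xi_i\le(1-\kappa)K/2\Big]\le\exp\{-(1-\kappa)^2K/2\}.$$
   Context: The $\beta$-LRP metric $D$ on $\mathbb{R}^d$ comes with a random set $\mathcal{E}$ of long edges $\langle\bm u,\bm v\rangle$, $\bm u,\bm v\in\mathbb{R}^d$, forming a Poisson point process with intensity $\beta|\bm u-\bm v|^{-2d}$: for disjoint Borel sets $U,W$, the probability of at least one long edge between $U$ and $W$ is $1-\exp\{-\int_U\int_W\beta|\bm u-\bm v|^{-2d}d\bm u\,d\bm v\}$, with independence over disjoint regions. $\theta\in(0,1)$ is the distance exponent of critical LRP. $B_r(\bm 0)$ is the Euclidean ball, $\mathbb{A}_{r,s}=B_r(\bm0)\setminus B_s(\bm 0)$, and $D(U,W;V)$ the $D$-distance between $U,W$ restricted to $V$. Fix $c_{*,1},c_{*,2}>0$ depending only on $d,\beta$ with $\mathbb{P}[D(B_{1/2}(\bm0),\mathbb{A}_{1,7/8};B_1(\bm 0))\ge c_{*,1}]\ge c_{*,2}$. For $\varepsilon\in(0,1)$ set $K=\sqrt{\log(1/\varepsilon)}$, $N=(4^{-(1+1/\theta)}(c_{*,1}/\varepsilon)^{1/\theta})^{1/K}$, $M_1=(4\varepsilon/c_{*,1})^{1/\theta}$, $M_i=NM_{i-1}$ ($2\le i\le K$),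 $r_i=\sum_{k=1}^iM_k$. For $i\in[1,K]_{\mathbb{Z}}$, $E_{i,1}$ is the event that some long edge connects $B_{r_i-M_i/8}(\bm0)$ and $B_{r_i}(\bm 0)^c$, and $\xi_i=1$ if $E_{i,1}^c$ occurs, $\xi_i=0$ otherwise. *)

theory Defs
  imports "HOL-Probability.Probability"
begin

text \<open>A (random) set of long edges is a set of pairs of points; the edge \<open>(u,v)\<close>
  is understood as the unordered edge between u and v.\<close>

definition connects :: "('a \<times> 'a) set \<Rightarrow> 'a set \<Rightarrow> 'a set \<Rightarrow> bool" where
  "connects Ed U W \<longleftrightarrow> (\<exists>(u, v) \<in> Ed. (u \<in> U \<and> v \<in> W) \<or> (u \<in> W \<and> v \<in> U))"

definition edge_region :: "'a set \<Rightarrow> 'a set \<Rightarrow> ('a \<times> 'a) set" where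
  "edge_region U W = {(u, v). (u \<in> U \<and> v \<in> W) \<or> (u \<in> W \<and> v \<in> U)}"

definition lrp_mass :: "real \<Rightarrow> (real ^ 'n) set \<Rightarrow> (real ^ 'n) set \<Rightarrow> ennreal" where
  "lrp_mass \<beta> U W =
     (\<integral>\<^sup>+ u. indicator U u * (\<integral>\<^sup>+ v. indicator W v *
         ennreal (\<beta> / norm (u - v) ^ (2 * CARD('n))) \<partial>lborel) \<partial>lborel)"

text \<open>\<open>lrp_edges \<beta> M E\<close>: on the probability space M, E is the random set of long edges of
  the beta-LRP: for disjoint Borel sets U, W the probability of an edge between U and W is
  \<open>1 - exp(-lrp_mass \<beta> U W)\<close>, with independence over disjoint regions.\<close>
definition lrp_edges ::
  "real \<Rightarrow> 'a measure \<Rightarrow> ('a \<Rightarrow> ((real ^ 'n) \<times> (real ^ 'n)) set) \<Rightarrow> bool" where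
  "lrp_edges \<beta> M E \<longleftrightarrow> prob_space M \<and>
     (\<forall>(J :: nat set) U W.
        finite J \<longrightarrow>
        (\<forall>j\<in>J. U j \<in> sets lborel \<and> W j \<in> sets lborel \<and> U j \<inter> W j = {}) \<longrightarrow>
        disjoint_family_on (\<lambda>j. edge_region (U j) (W j)) J \<longrightarrow>
          (\<forall>j\<in>J. {\<omega> \<in> space M. connects (E \<omega>) (U j) (W j)} \<in> sets M \<and>
             measure M {\<omega> \<in> space M. connects (E \<omega>) (U j) (W j)} =
               (if lrp_mass \<beta> (U j) (W j) = \<infinity> then 1
                else 1 - exp (- enn2real (lrp_mass \<beta> (U j) (W j))))) \<and>
          prob_space.indep_events M
            (\<lambda>j. {\<omega> \<in> space M. connects (E \<omega>) (U j) (W j)}) J)"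

definition scaleK :: "real \<Rightarrow> real" where
  "scaleK \<epsilon> = sqrt (ln (1 / \<epsilon>))"

definition scaleN :: "real \<Rightarrow> real \<Rightarrow> real \<Rightarrow> real" where
  "scaleN \<theta> c1 \<epsilon> =
     (4 powr (- (1 + 1 / \<theta>)) * (c1 / \<epsilon>) powr (1 / \<theta>)) powr (1 / scaleK \<epsilon>)"

definition scaleM :: "real \<Rightarrow> real \<Rightarrow> real \<Rightarrow> nat \<Rightarrow> real" where
  "scaleM \<theta> c1 \<epsilon> i = scaleN \<theta> c1 \<epsilon> ^ (i - 1) * (4 * \<epsilon> / c1) powr (1 / \<theta>)"

definition scaler :: "real \<Rightarrow> real \<Rightarrow> real \<Rightarrow> nat \<Rightarrow> real" where
  "scaler \<theta> c1 \<epsilon> i = (\<Sum>k = 1..i. scaleM \<theta> c1 \<epsilon> k)"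

definition xi :: "real \<Rightarrow> real \<Rightarrow> real \<Rightarrow> ((real ^ 'n) \<times> (real ^ 'n)) set \<Rightarrow> nat \<Rightarrow> real" where
  "xi \<theta> c1 \<epsilon> Ed i =
     (if connects Ed (ball 0 (scaler \<theta> c1 \<epsilon> i - scaleM \<theta> c1 \<epsilon> i / 8))
                     (- ball 0 (scaler \<theta> c1 \<epsilon> i))
      then 0 else 1)"

end

theory Submission
  imports Defs
begin

lemma nn_inv_sq: "(\<integral>\<^sup>+x. ennreal (inverse (1 + x^2)) \<partial>lborel) = ennreal pi"
proof -
  have i: "integrable lborel (\<lambda>x::real. inverse (1 + x^2))"
    using integrable_inverse_1_plus_square by (simp add: set_integrable_def)
  have "(\<integral>\<^sup>+x. ennreal (inverse (1 + x^2)) \<partial>lborel) = ennreal (integral\<^sup>L lborel (\<lambda>x::real. inverse (1 + x^2)))"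
    by (rule nn_integral_eq_integral[OF i]) (auto intro!: AE_I2 add_nonneg_nonneg)
  also have "integral\<^sup>L lborel (\<lambda>x::real. inverse (1 + x^2)) = pi"
    using LBINT_inverse_1_plus_square by (simp add: interval_lebesgue_integral_def set_lebesgue_integral_def)
  finally show ?thesis .
qed

lemma nn_inv_sq_scaled:
  fixes \<rho> :: real assumes "\<rho> > 0"
  shows "(\<integral>\<^sup>+x. ennreal (1 / (\<rho>^2 + x^2)) \<partial>lborel) = ennreal (pi / \<rho>)"
proof -
  have "(\<integral>\<^sup>+x. ennreal (1 / (\<rho>^2 + x^2)) \<partial>lborel) = ennreal \<bar>\<rho>\<bar> * (\<integral>\<^sup>+x. ennreal (1 / (\<rho>^2 + (0 + \<rho> * x)^2)) \<partial>lborel)"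
    by (rule nn_integral_real_affine) (use assms in auto)
  also have "(\<lambda>x. ennreal (1 / (\<rho>^2 + (0 + \<rho> * x)^2))) = (\<lambda>x. ennreal (1 / \<rho>^2) * ennreal (inverse (1 + x^2)))"
  proof
    fix x
    have "1 / (\<rho>^2 + (0 + \<rho> * x)^2) = (1 / \<rho>^2) * inverse (1 + x^2)"
      using assms by (simp add: field_simps power_mult_distrib)
    then show "ennreal (1 / (\<rho>^2 + (0 + \<rho> * x)^2)) = ennreal (1 / \<rho>^2) * ennreal (inverse (1 + x^2))"
      by (subst \<open>1 / (\<rho>^2 + (0 + \<rho> * x)^2) = (1 / \<rho>^2) * inverse (1 + x^2)\<close>) (rule ennreal_mult, auto simp: add_nonneg_nonneg)
  qed
  also have "(\<integral>\<^sup>+x. ennreal (1 / \<rho>^2) * ennreal (inverse (1 + x^2)) \<partial>lborel) = ennreal (1 / \<rho>^2) * ennreal pi"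
    by (subst nn_integral_cmult) (auto simp: nn_inv_sq)
  also have "ennreal \<bar>\<rho>\<bar> * (ennreal (1 / \<rho>^2) * ennreal pi) = ennreal (pi / \<rho>)"
    using assms by (simp add: ennreal_mult'[symmetric] power2_eq_square field_simps)
  finally show ?thesis .
qed

lemma nn_prod_int:
  fixes \<rho> :: real assumes "\<rho> > 0"
  shows "(\<integral>\<^sup>+w. (\<Prod>b\<in>Basis. ennreal (1 / (\<rho>^2 + (w \<bullet> b)^2))) \<partial>(lborel :: 'a::euclidean_space measure))
     = ennreal ((pi / \<rho>) ^ DIM('a))"
proof -
  have "(\<integral>\<^sup>+w. (\<Prod>b\<in>Basis. ennreal (1 / (\<rho>^2 + (w \<bullet> b)^2))) \<partial>(lborel :: 'a measure))
     = (\<Prod>b\<in>(Basis::'a set). (\<integral>\<^sup>+x. ennreal (1 / (\<rho>^2 + x^2)) \<partial>lborel))"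
    by (rule nn_integral_lborel_prod[where f = "\<lambda>b x. ennreal (1 / (\<rho>^2 + x^2))"]) auto
  also have "\<dots> = ennreal (pi / \<rho>) ^ DIM('a)"
    using assms by (simp add: nn_inv_sq_scaled)
  finally show ?thesis using assms by (simp add: ennreal_power)
qed

lemma pointwise_bd:
  fixes w :: "'a::euclidean_space" and \<beta> \<rho> :: real
  assumes "\<beta> \<ge> 0" "\<rho> > 0" "\<rho> \<le> norm w"
  shows "\<beta> / norm w ^ (2 * DIM('a)) \<le> \<beta> * 2 ^ DIM('a) * (\<Prod>b\<in>Basis. 1 / (\<rho>^2 + (w \<bullet> b)^2))"
proof -
  have nw: "norm w > 0" using assms by linarith
  have "(\<Prod>b\<in>(Basis::'a set). \<rho>^2 + (w \<bullet> b)^2) \<le> (\<Prod>b\<in>(Basis::'a set). 2 * norm w ^ 2)"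
  proof (rule prod_mono)
    fix b :: 'a assume b: "b \<in> Basis"
    have "\<bar>w \<bullet> b\<bar> \<le> norm w" using b by (rule Basis_le_norm)
    then have "(w \<bullet> b)^2 \<le> norm w ^ 2" by (metis abs_ge_zero power2_abs power_mono)
    moreover have "\<rho>^2 \<le> norm w ^ 2" using assms by (intro power_mono) auto
    ultimately show "0 \<le> \<rho>^2 + (w \<bullet> b)^2 \<and> \<rho>^2 + (w \<bullet> b)^2 \<le> 2 * norm w ^ 2" by auto
  qed
  also have "\<dots> = 2 ^ DIM('a) * norm w ^ (2 * DIM('a))"
    by (simp add: power_mult power_mult_distrib)
  finally have P: "(\<Prod>b\<in>(Basis::'a set). \<rho>^2 + (w \<bullet> b)^2) \<le> 2 ^ DIM('a) * norm w ^ (2 * DIM('a))" .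
  have Ppos: "(\<Prod>b\<in>(Basis::'a set). \<rho>^2 + (w \<bullet> b)^2) > 0"
    using assms by (intro prod_pos) (auto intro: add_pos_nonneg)
  have "(\<Prod>b\<in>(Basis::'a set). 1 / (\<rho>^2 + (w \<bullet> b)^2)) = 1 / (\<Prod>b\<in>(Basis::'a set). \<rho>^2 + (w \<bullet> b)^2)"
    by (simp add: prod_dividef)
  then have "\<beta> * 2 ^ DIM('a) * (\<Prod>b\<in>Basis. 1 / (\<rho>^2 + (w \<bullet> b)^2))
      = \<beta> * 2 ^ DIM('a) / (\<Prod>b\<in>(Basis::'a set). \<rho>^2 + (w \<bullet> b)^2)" by simp
  also have "\<dots> \<ge> \<beta> * 2 ^ DIM('a) / (2 ^ DIM('a) * norm w ^ (2 * DIM('a)))"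
    using P Ppos assms by (intro divide_left_mono) (auto intro!: mult_pos_pos)
  also have "\<beta> * 2 ^ DIM('a) / (2 ^ DIM('a) * norm w ^ (2 * DIM('a))) = \<beta> / norm w ^ (2 * DIM('a))"
    by simp
  finally show ?thesis .
qed

lemma tail_bd:
  fixes u :: "'a::euclidean_space" and \<beta> \<rho> :: real
  assumes "\<beta> \<ge> 0" "\<rho> > 0" "\<And>v. v \<in> W \<Longrightarrow> \<rho> \<le> norm (u - v)"
  shows "(\<integral>\<^sup>+v. indicator W v * ennreal (\<beta> / norm (u - v) ^ (2 * DIM('a))) \<partial>lborel)
     \<le> ennreal (\<beta> * 2 ^ DIM('a) * (pi / \<rho>) ^ DIM('a))"
proof -
  define F where "F = (\<lambda>w::'a. (\<Prod>b\<in>Basis. ennreal (1 / (\<rho>^2 + (w \<bullet> b)^2))))"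
  have Fm: "F \<in> borel_measurable borel" unfolding F_def by measurable
  have "(\<integral>\<^sup>+v. indicator W v * ennreal (\<beta> / norm (u - v) ^ (2 * DIM('a))) \<partial>lborel)
      \<le> (\<integral>\<^sup>+v. ennreal (\<beta> * 2 ^ DIM('a)) * F (-u + v) \<partial>lborel)"
  proof (rule nn_integral_mono)
    fix v :: 'a
    show "indicator W v * ennreal (\<beta> / norm (u - v) ^ (2 * DIM('a))) \<le> ennreal (\<beta> * 2 ^ DIM('a)) * F (-u + v)"
    proof (cases "v \<in> W")
      case True
      have e: "(\<Prod>b\<in>(Basis::'a set). 1 / (\<rho>^2 + ((u - v) \<bullet> b)^2)) = (\<Prod>b\<in>(Basis::'a set). 1 / (\<rho>^2 + ((-u + v) \<bullet> b)^2))"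
      proof (rule prod.cong)
        fix b :: 'a
        have "(u - v) \<bullet> b = - ((-u + v) \<bullet> b)" by (simp add: inner_diff_left inner_add_left)
        then show "1 / (\<rho>^2 + ((u - v) \<bullet> b)^2) = 1 / (\<rho>^2 + ((-u + v) \<bullet> b)^2)" by simp
      qed simp
      have "\<beta> / norm (u - v) ^ (2 * DIM('a)) \<le> \<beta> * 2 ^ DIM('a) * (\<Prod>b\<in>Basis. 1 / (\<rho>^2 + ((u - v) \<bullet> b)^2))"
        using pointwise_bd[OF assms(1,2) assms(3)[OF True]] .
      then have "ennreal (\<beta> / norm (u - v) ^ (2 * DIM('a))) \<le> ennreal (\<beta> * 2 ^ DIM('a) * (\<Prod>b\<in>Basis. 1 / (\<rho>^2 + ((-u + v) \<bullet> b)^2)))"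
        using e by (intro ennreal_leI) simp
      also have "\<dots> = ennreal (\<beta> * 2 ^ DIM('a)) * F (-u + v)"
        unfolding F_def using assms
        by (subst ennreal_mult) (auto intro!: prod_nonneg add_nonneg_nonneg simp: prod_ennreal)
      finally show ?thesis using True by simp
    qed simp
  qed
  also have "\<dots> = ennreal (\<beta> * 2 ^ DIM('a)) * (\<integral>\<^sup>+v. F (-u + v) \<partial>lborel)"
    by (rule nn_integral_cmult) (use Fm in measurable)
  also have "(\<integral>\<^sup>+v. F (-u + v) \<partial>lborel) = (\<integral>\<^sup>+w. F w \<partial>(distr lborel borel ((+) (-u))))"
    by (subst nn_integral_distr) (use Fm in auto)
  also have "\<dots> = (\<integral>\<^sup>+w. F w \<partial>lborel)" by (simp add: lborel_distr_plus)
  also have "\<dots> = ennreal ((pi / \<rho>) ^ DIM('a))" unfolding F_def by (rule nn_prod_int[OF assms(2)])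
  also have "ennreal (\<beta> * 2 ^ DIM('a)) * ennreal ((pi / \<rho>) ^ DIM('a)) = ennreal (\<beta> * 2 ^ DIM('a) * (pi / \<rho>) ^ DIM('a))"
    using assms by (simp add: ennreal_mult)
  finally show ?thesis .
qed

lemma mass_bd:
  fixes U W :: "(real ^ 'n) set" and \<beta> \<rho> a :: real
  assumes "\<beta> \<ge> 0" "\<rho> > 0" "a \<ge> 0" "U \<subseteq> ball 0 a"
    "\<And>u v. u \<in> U \<Longrightarrow> v \<in> W \<Longrightarrow> \<rho> \<le> norm (u - v)"
  shows "lrp_mass \<beta> U W \<le> ennreal (\<beta> * 2 ^ CARD('n) * (pi / \<rho>) ^ CARD('n) * (unit_ball_vol (CARD('n)) * a ^ CARD('n)))"
proof -
  define C where "C = \<beta> * 2 ^ CARD('n) * (pi / \<rho>) ^ CARD('n)"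
  have C0: "C \<ge> 0" unfolding C_def using assms by auto
  have "lrp_mass \<beta> U W \<le> (\<integral>\<^sup>+u. ennreal C * indicator (ball (0::real^'n) a) u \<partial>lborel)"
    unfolding lrp_mass_def
  proof (rule nn_integral_mono)
    fix u :: "real ^ 'n"
    show "indicator U u * (\<integral>\<^sup>+v. indicator W v * ennreal (\<beta> / norm (u - v) ^ (2 * CARD('n))) \<partial>lborel)
        \<le> ennreal C * indicator (ball 0 a) u"
    proof (cases "u \<in> U")
      case True
      then have "u \<in> ball 0 a" using assms by auto
      moreover have "(\<integral>\<^sup>+v. indicator W v * ennreal (\<beta> / norm (u - v) ^ (2 * CARD('n))) \<partial>lborel) \<le> ennreal C"
        using tail_bd[of \<beta> \<rho> W u] assms True unfolding C_def by simp
      ultimately show ?thesis using True by simp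
    qed simp
  qed
  also have "\<dots> = ennreal C * emeasure lborel (ball (0::real^'n) a)"
    by (rule nn_integral_cmult_indicator) simp
  also have "\<dots> = ennreal C * ennreal (unit_ball_vol (CARD('n)) * a ^ CARD('n))"
    using emeasure_ball[of a "0::real^'n"] assms by simp
  also have "\<dots> = ennreal (C * (unit_ball_vol (CARD('n)) * a ^ CARD('n)))"
    using C0 assms by (simp add: ennreal_mult)
  finally show ?thesis unfolding C_def .
qed


lemma scaler_0[simp]: "scaler \<theta> c1 \<epsilon> 0 = 0"
  by (simp add: scaler_def)

lemma scaler_Suc: "scaler \<theta> c1 \<epsilon> (Suc j) = scaler \<theta> c1 \<epsilon> j + scaleM \<theta> c1 \<epsilon> (Suc j)"
  by (simp add: scaler_def)

lemma scaleM_pos: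
  assumes "scaleN \<theta> c1 \<epsilon> > 0" "\<epsilon> > 0" "c1 > 0"
  shows "scaleM \<theta> c1 \<epsilon> i > 0"
  using assms by (simp add: scaleM_def)

lemma scaler_bound:
  assumes "scaleN \<theta> c1 \<epsilon> \<ge> 1" "\<epsilon> > 0" "c1 > 0"
  shows "scaler \<theta> c1 \<epsilon> j * (scaleN \<theta> c1 \<epsilon> - 1) \<le> (4 * \<epsilon> / c1) powr (1 / \<theta>) * scaleN \<theta> c1 \<epsilon> ^ j"
proof (induction j)
  case 0
  then show ?case using assms by simp
next
  case (Suc j)
  have "scaler \<theta> c1 \<epsilon> (Suc j) * (scaleN \<theta> c1 \<epsilon> - 1)
      = scaler \<theta> c1 \<epsilon> j * (scaleN \<theta> c1 \<epsilon> - 1) + scaleM \<theta> c1 \<epsilon> (Suc j) * (scaleN \<theta> c1 \<epsilon> - 1)"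
    by (simp add: scaler_Suc algebra_simps)
  also have "\<dots> \<le> (4 * \<epsilon> / c1) powr (1 / \<theta>) * scaleN \<theta> c1 \<epsilon> ^ j + (4 * \<epsilon> / c1) powr (1 / \<theta>) * scaleN \<theta> c1 \<epsilon> ^ j * (scaleN \<theta> c1 \<epsilon> - 1)"
    using Suc by (simp add: scaleM_def mult.commute)
  also have "\<dots> = (4 * \<epsilon> / c1) powr (1 / \<theta>) * scaleN \<theta> c1 \<epsilon> ^ Suc j"
    by (simp add: algebra_simps)
  finally show ?case .
qed

lemma scaler_mono:
  assumes "scaleN \<theta> c1 \<epsilon> > 0" "\<epsilon> > 0" "c1 > 0" "i \<le> j"
  shows "scaler \<theta> c1 \<epsilon> i \<le> scaler \<theta> c1 \<epsilon> j"
  unfolding scaler_def using assms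
  by (intro sum_mono2) (auto intro: less_imp_le scaleM_pos)

lemma scaler_le_2M:
  assumes "scaleN \<theta> c1 \<epsilon> \<ge> 2" "\<epsilon> > 0" "c1 > 0" "i \<ge> 1"
  shows "scaler \<theta> c1 \<epsilon> i \<le> 2 * scaleM \<theta> c1 \<epsilon> i"
proof -
  define N where "N = scaleN \<theta> c1 \<epsilon>"
  define m where "m = (4 * \<epsilon> / c1) powr (1 / \<theta>)"
  have m: "m > 0" using assms by (simp add: m_def)
  have "scaler \<theta> c1 \<epsilon> i * (N - 1) \<le> m * N ^ i"
    using scaler_bound[of \<theta> c1 \<epsilon> i] assms by (simp add: N_def m_def)
  also have "m * N ^ i = N * scaleM \<theta> c1 \<epsilon> i"
    using assms by (cases i) (simp_all add: scaleM_def N_def m_def)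
  also have "N * scaleM \<theta> c1 \<epsilon> i \<le> 2 * scaleM \<theta> c1 \<epsilon> i * (N - 1)"
    using assms scaleM_pos[of \<theta> c1 \<epsilon> i] by (simp add: N_def algebra_simps)
  finally show ?thesis using assms by (simp add: N_def)
qed

lemma scaler_pred_le:
  assumes "scaleN \<theta> c1 \<epsilon> \<ge> 2" "\<epsilon> > 0" "c1 > 0" "i \<ge> 1"
  shows "scaler \<theta> c1 \<epsilon> (i - 1) \<le> scaleM \<theta> c1 \<epsilon> i / (scaleN \<theta> c1 \<epsilon> - 1)"
proof -
  define N where "N = scaleN \<theta> c1 \<epsilon>"
  have "scaler \<theta> c1 \<epsilon> (i - 1) * (N - 1) \<le> (4 * \<epsilon> / c1) powr (1 / \<theta>) * N ^ (i - 1)"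
    using scaler_bound[of \<theta> c1 \<epsilon> "i - 1"] assms by (simp add: N_def)
  also have "\<dots> = scaleM \<theta> c1 \<epsilon> i" by (simp add: scaleM_def N_def mult.commute)
  finally show ?thesis using assms by (simp add: N_def pos_le_divide_eq)
qed

lemma scaler_step:
  assumes "i \<ge> 1"
  shows "scaler \<theta> c1 \<epsilon> i = scaler \<theta> c1 \<epsilon> (i - 1) + scaleM \<theta> c1 \<epsilon> i"
  using assms scaler_Suc[of \<theta> c1 \<epsilon> "i - 1"] by simp

lemma scaleN_lower:
  assumes "0 < \<theta>" "\<theta> < 1" "c1 > 0" "0 < \<epsilon>" "\<epsilon> < 1" "scaleK \<epsilon> \<ge> 1"
  shows "scaleN \<theta> c1 \<epsilon> \<ge> exp (scaleK \<epsilon> - \<bar>(1 + 1 / \<theta>) * ln 4 - ln c1 / \<theta>\<bar>)"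
proof -
  define K where "K = scaleK \<epsilon>"
  define B where "B = (1 + 1 / \<theta>) * ln 4 - ln c1 / \<theta>"
  have K2: "K^2 = - ln \<epsilon>"
    using assms by (simp add: K_def scaleK_def ln_div)
  have K0: "K > 0" using assms by (simp add: K_def)
  define inner where "inner = 4 powr (- (1 + 1 / \<theta>)) * (c1 / \<epsilon>) powr (1 / \<theta>)"
  have ip: "inner > 0" using assms by (simp add: inner_def)
  have "ln inner = - (1 + 1 / \<theta>) * ln 4 + (1 / \<theta>) * (ln c1 - ln \<epsilon>)"
    using assms by (simp add: inner_def ln_mult ln_powr ln_div)
  also have "\<dots> = K^2 / \<theta> - B" using K2 by (simp add: B_def diff_divide_distrib add_divide_distrib algebra_simps)
  finally have li: "ln inner = K^2 / \<theta> - B" .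
  have N0: "scaleN \<theta> c1 \<epsilon> = inner powr (1 / K)"
    by (simp add: scaleN_def inner_def K_def)
  have N: "scaleN \<theta> c1 \<epsilon> = exp (ln inner / K)"
    unfolding N0 using ip by (simp add: powr_def)
  have "ln inner / K = K / \<theta> - B / K" using li K0 by (simp add: field_simps power2_eq_square)
  moreover have "K / \<theta> \<ge> K" using assms K0 by (simp add: le_divide_eq)
  moreover have "B / K \<le> \<bar>B\<bar>"
  proof -
    have "B / K \<le> \<bar>B\<bar> / K" using K0 by (simp add: divide_right_mono)
    also have "\<dots> \<le> \<bar>B\<bar>" using assms K0 by (simp add: K_def divide_le_eq mult_le_cancel_left1)
    finally show ?thesis .
  qed
  ultimately have "ln inner / K \<ge> K - \<bar>B\<bar>" by linarith
  then show ?thesis unfolding N by (simp add: K_def B_def)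
qed


lemma connects_Un: "connects Ed (A \<union> B) W \<longleftrightarrow> connects Ed A W \<or> connects Ed B W"
  unfolding connects_def by blast

lemma lrp_single:
  assumes "lrp_edges \<beta> M E" "U \<in> sets lborel" "W \<in> sets lborel" "U \<inter> W = {}"
    "lrp_mass \<beta> U W \<le> ennreal x" "x \<ge> 0"
  shows "{\<omega> \<in> space M. connects (E \<omega>) U W} \<in> sets M \<and>
    (\<exists>m. 0 \<le> m \<and> m \<le> x \<and> measure M {\<omega> \<in> space M. connects (E \<omega>) U W} = 1 - exp (- m))"
proof -
  have "\<forall>j\<in>{0::nat}. {\<omega> \<in> space M. connects (E \<omega>) ((\<lambda>_. U) j) ((\<lambda>_. W) j)} \<in> sets M \<and>
             measure M {\<omega> \<in> space M. connects (E \<omega>) ((\<lambda>_. U) j) ((\<lambda>_. W) j)} =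
               (if lrp_mass \<beta> ((\<lambda>_. U) j) ((\<lambda>_. W) j) = \<infinity> then 1
                else 1 - exp (- enn2real (lrp_mass \<beta> ((\<lambda>_. U) j) ((\<lambda>_. W) j))))"
    using assms(1) unfolding lrp_edges_def
    by (elim conjE allE[of _ "{0::nat}"] allE[of _ "\<lambda>_. U"] allE[of _ "\<lambda>_. W"]) 
       (use assms(2-4) in \<open>auto simp: disjoint_family_on_def\<close>)
  then have S: "{\<omega> \<in> space M. connects (E \<omega>) U W} \<in> sets M"
    and P: "measure M {\<omega> \<in> space M. connects (E \<omega>) U W} =
               (if lrp_mass \<beta> U W = \<infinity> then 1 else 1 - exp (- enn2real (lrp_mass \<beta> U W)))"
    by auto
  have fin: "lrp_mass \<beta> U W \<noteq> \<infinity>" using assms(5) by (auto simp: top_unique)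
  have "enn2real (lrp_mass \<beta> U W) \<le> enn2real (ennreal x)"
    using assms(5) by (intro enn2real_mono) auto
  then have "enn2real (lrp_mass \<beta> U W) \<le> x" using assms(6) by simp
  then show ?thesis using S P fin by (intro conjI exI[of _ "enn2real (lrp_mass \<beta> U W)"]) auto
qed

lemma indep_vars_indicators:
  assumes "prob_space M" "prob_space.indep_events M F I"
  shows "prob_space.indep_vars M (\<lambda>_. borel) (\<lambda>i \<omega>. if \<omega> \<in> F i then 0 else (1::real)) I"
proof -
  interpret prob_space M by fact
  have ev: "\<And>i. i \<in> I \<Longrightarrow> F i \<in> sets M"
    using assms(2) by (auto simp: indep_events_def)
  have "indep_sets (\<lambda>i. sigma_sets (space M) {F i}) I"
    using assms(2) unfolding indep_events_def_alt
    by (rule indep_sets_sigma) (auto simp: Int_stable_def)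
  then have "indep_sets (\<lambda>i. {(\<lambda>\<omega>. if \<omega> \<in> F i then 0 else (1::real)) -` A \<inter> space M | A. A \<in> sets borel}) I"
  proof (rule indep_sets_mono_sets)
    fix i assume i: "i \<in> I"
    show "{(\<lambda>\<omega>. if \<omega> \<in> F i then 0 else (1::real)) -` A \<inter> space M | A. A \<in> sets borel} \<subseteq> sigma_sets (space M) {F i}"
    proof safe
      fix A :: "real set"
      have sub: "F i \<subseteq> space M" using ev[OF i] sets.sets_into_space by auto
      have b: "F i \<in> sigma_sets (space M) {F i}" by (rule sigma_sets.Basic) simp
      have c: "space M - F i \<in> sigma_sets (space M) {F i}" by (rule sigma_sets.Compl[OF b])
      have e: "{} \<in> sigma_sets (space M) {F i}" by (rule sigma_sets.Empty)
      have t: "space M \<in> sigma_sets (space M) {F i}" using sigma_sets_top .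
      show "(\<lambda>\<omega>. if \<omega> \<in> F i then 0 else (1::real)) -` A \<inter> space M \<in> sigma_sets (space M) {F i}"
      proof (cases "0 \<in> A"; cases "1 \<in> A")
        assume "0 \<in> A" "1 \<in> A"
        then have "(\<lambda>\<omega>. if \<omega> \<in> F i then 0 else (1::real)) -` A \<inter> space M = space M" by auto
        then show ?thesis using t by simp
      next
        assume "0 \<in> A" "1 \<notin> A"
        then have "(\<lambda>\<omega>. if \<omega> \<in> F i then 0 else (1::real)) -` A \<inter> space M = F i" using sub by auto
        then show ?thesis using b by simp
      next
        assume "0 \<notin> A" "1 \<in> A"
        then have "(\<lambda>\<omega>. if \<omega> \<in> F i then 0 else (1::real)) -` A \<inter> space M = space M - F i" by auto
        then show ?thesis using c by simp
      next
        assume "0 \<notin> A" "1 \<notin> A"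
        then have "(\<lambda>\<omega>. if \<omega> \<in> F i then 0 else (1::real)) -` A \<inter> space M = {}" by auto
        then show ?thesis using e by simp
      qed
    qed
  qed
  moreover have "\<forall>i\<in>I. random_variable borel (\<lambda>\<omega>. if \<omega> \<in> F i then 0 else (1::real))"
    using ev by auto
  ultimately show ?thesis unfolding indep_vars_def2 by blast
qed

lemma edge_disj:
  assumes "\<forall>x\<in>A1. norm x < s" "\<forall>x\<in>A2 \<union> B2. s \<le> (norm x :: real)"
  shows "edge_region A1 B1 \<inter> edge_region A2 B2 = {}"
  using assms unfolding edge_region_def by force


lemma numeric_final:
  fixes p K A t1 t2 :: real
  assumes "p > 0" "p \<le> 1" "K \<ge> 4" "K \<ge> 8 / (3 * p^2)" "K \<ge> 3 * A" "A \<ge> 0"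
    "t1 \<le> exp (- (p^2 * K / 2))" "t2 \<le> A / 2 * K * exp (- K)"
  shows "t1 + t2 \<le> exp (- (p^2 * K / 8))"
proof -
  have e1: "exp (-1) \<le> (1/2::real)"
  proof -
    have "2 \<le> exp (1::real)" using exp_ge_add_one_self[of 1] by simp
    then show ?thesis by (simp add: exp_minus field_simps)
  qed
  have "3 * p^2 * K / 8 \<ge> 1"
    using assms(1,4) by (simp add: divide_le_eq field_simps)
  then have "exp (- (3 * p^2 * K / 8)) \<le> exp (-1)" by simp
  then have h: "exp (- (3 * p^2 * K / 8)) \<le> 1/2" using e1 by linarith
  have "exp (- (p^2 * K / 2)) = exp (- (p^2 * K / 8)) * exp (- (3 * p^2 * K / 8))"
    by (simp add: exp_add[symmetric])
  also have "\<dots> \<le> exp (- (p^2 * K / 8)) * (1/2)"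
    using h by (intro mult_left_mono) auto
  finally have T1: "t1 \<le> exp (- (p^2 * K / 8)) / 2" using assms(7) by simp
  have q: "1 + 7*K/8 + (7*K/8)^2/2 \<le> exp (7*K/8)"
    using exp_lower_Taylor_quadratic[of "7*K/8"] assms(3) by simp
  have "A * K \<le> (7*K/8)^2/2"
  proof -
    have "A * K \<le> (K/3) * K" using assms(3,5) by (intro mult_right_mono) auto
    also have "\<dots> \<le> (7*K/8)^2/2" by (simp add: power2_eq_square field_simps)
    finally show ?thesis .
  qed
  then have AK: "A * K \<le> exp (7*K/8)" using q assms(3) by linarith
  have "p^2 \<le> 1" using assms(1,2) by (simp add: power_le_one)
  then have "- K \<le> - (p^2 * K / 8) - 7*K/8" using assms(3) by (simp add: field_simps)
  then have "A * K * exp (- K) \<le> exp (7*K/8) * exp (- (p^2 * K / 8) - 7*K/8)"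
    using AK by (intro mult_mono) auto
  also have "\<dots> = exp (- (p^2 * K / 8))" by (simp add: exp_add[symmetric])
  finally have "t2 \<le> exp (- (p^2 * K / 8)) / 2" using assms(8) by simp
  then show ?thesis using T1 by simp
qed


lemma hoeff_indicator:
  fixes M :: "'a measure" and F :: "nat \<Rightarrow> 'a set" and I :: "nat set" and c :: real
  assumes "prob_space M" "finite I" "I \<noteq> {}"
    "prob_space.indep_vars M (\<lambda>_. borel) (\<lambda>i \<omega>. if \<omega> \<in> F i then 0 else (1::real)) I"
    "\<mu> = (\<Sum>i\<in>I. prob_space.expectation M (\<lambda>\<omega>. if \<omega> \<in> F i then 0 else (1::real)))"
    "c \<ge> 0"
  shows "measure M {x\<in>space M. (\<Sum>i\<in>I. (if x \<in> F i then 0 else (1::real))) \<le> \<mu> - c}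
     \<le> exp (-2 * c\<^sup>2 / real (card I))"
proof -
  interpret prob_space M by fact
  interpret Hf: Hoeffding_ineq M I "\<lambda>i \<omega>. if \<omega> \<in> F i then 0 else (1::real)" "\<lambda>_. 0" "\<lambda>_. 1" \<mu>
  proof unfold_locales
    show "finite I" by fact
    show "indep_vars (\<lambda>_. borel) (\<lambda>i \<omega>. if \<omega> \<in> F i then 0 else (1::real)) I" by fact
    show "AE x in M. (if x \<in> F i then 0 else (1::real)) \<in> {0..1}" if "i \<in> I" for i
      by (rule AE_I2) simp
    show "\<mu> \<equiv> (\<Sum>i\<in>I. expectation (\<lambda>\<omega>. if \<omega> \<in> F i then 0 else (1::real)))"
      using assms(5) by simp
  qed
  have "(\<Sum>i\<in>I. (1 - 0)\<^sup>2) = real (card I)" by simp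
  moreover have "(\<Sum>i\<in>I. ((1::real) - 0)\<^sup>2) > 0" using assms(2,3) by (simp add: card_gt_0_iff)
  ultimately show ?thesis using Hf.Hoeffding_ineq_le[OF assms(6)] by simp
qed


lemma mass_bd2:
  fixes U W :: "(real ^ 'n) set" and \<beta> \<rho> a q :: real
  assumes "\<beta> \<ge> 0" "\<rho> > 0" "a \<ge> 0" "U \<subseteq> ball 0 a"
    "\<And>u v. u \<in> U \<Longrightarrow> v \<in> W \<Longrightarrow> \<rho> \<le> norm (u - v)" "(a / \<rho>) ^ CARD('n) \<le> q"
  shows "lrp_mass \<beta> U W \<le> ennreal (\<beta> * (2 ^ CARD('n) * pi ^ CARD('n) * unit_ball_vol (CARD('n))) * q)"
proof -
  have "lrp_mass \<beta> U W \<le> ennreal (\<beta> * 2 ^ CARD('n) * (pi / \<rho>) ^ CARD('n) * (unit_ball_vol (CARD('n)) * a ^ CARD('n)))"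
    by (rule mass_bd) (use assms in auto)
  also have "\<beta> * 2 ^ CARD('n) * (pi / \<rho>) ^ CARD('n) * (unit_ball_vol (CARD('n)) * a ^ CARD('n))
     = \<beta> * (2 ^ CARD('n) * pi ^ CARD('n) * unit_ball_vol (CARD('n))) * (a / \<rho>) ^ CARD('n)"
    by (simp add: power_divide)
  also have "\<dots> \<le> \<beta> * (2 ^ CARD('n) * pi ^ CARD('n) * unit_ball_vol (CARD('n))) * q"
    using assms by (intro mult_left_mono) auto
  finally show ?thesis by (simp add: ennreal_leI order_trans)
qed

lemma norm_gap:
  fixes u v :: "real ^ 'n"
  assumes "norm u < s" "t \<le> norm v"
  shows "t - s \<le> norm (u - v)"
proof -
  have "norm v - norm u \<le> norm (u - v)" by (metis norm_minus_commute norm_triangle_ineq2)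
  then show ?thesis using assms by linarith
qed

theorem proposition3p3:
  fixes \<beta> \<theta> c1 :: real
  assumes "\<beta> > 0" and "0 < \<theta>" and "\<theta> < 1" and "c1 > 0"
  shows "\<exists>\<kappa>. 0 < \<kappa> \<and> \<kappa> < 1 \<and>
    (\<exists>\<epsilon>0 > 0. \<forall>\<epsilon>. 0 < \<epsilon> \<and> \<epsilon> < \<epsilon>0 \<longrightarrow>
       (\<forall>(M :: 'a measure) (E :: 'a \<Rightarrow> ((real ^ 'n) \<times> (real ^ 'n)) set).
          lrp_edges \<beta> M E \<longrightarrow>
          measure M {\<omega> \<in> space M.
             (\<Sum>i = 1..nat \<lfloor>scaleK \<epsilon>\<rfloor>. xi \<theta> c1 \<epsilon> (E \<omega>) i) \<le> (1 - \<kappa>) * scaleK \<epsilon> / 2}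
          \<le> exp (- ((1 - \<kappa>)\<^sup>2 * scaleK \<epsilon> / 2))))"
proof -
  define d where "d = CARD('n)"
  have d1: "d \<ge> 1" unfolding d_def by (simp add: Suc_leI)
  define cn where "cn = 2 ^ CARD('n) * pi ^ CARD('n) * unit_ball_vol (CARD('n))"
  have cn: "cn > 0" unfolding cn_def by simp
  define Cf where "Cf = \<beta> * cn * 16 ^ d"
  have Cf: "Cf \<ge> 0" unfolding Cf_def using assms cn by simp
  define p where "p = exp (- Cf)"
  have p0: "p > 0" and p1: "p \<le> 1" using Cf by (auto simp: p_def)
  define \<kappa> where "\<kappa> = 1 - p / 2"
  define B where "B = \<bar>(1 + 1 / \<theta>) * ln 4 - ln c1 / \<theta>\<bar>"
  have B0: "B \<ge> 0" by (simp add: B_def)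
  define A where "A = 4 * \<beta> * cn * exp B"
  have A0: "A \<ge> 0" using assms cn by (simp add: A_def)
  define K0 where "K0 = max (max 4 (8 / (3 * p^2))) (max (3 * A) (B + 17))"
  define \<epsilon>0 where "\<epsilon>0 = exp (- (K0^2))"
  have K04: "K0 \<ge> 4" by (simp add: K0_def)
  have "\<epsilon>0 > 0" by (simp add: \<epsilon>0_def)
  moreover have "0 < \<kappa>" "\<kappa> < 1" using p0 p1 by (auto simp: \<kappa>_def)
  moreover have "measure M {\<omega> \<in> space M.
             (\<Sum>i = 1..nat \<lfloor>scaleK \<epsilon>\<rfloor>. xi \<theta> c1 \<epsilon> (E \<omega>) i) \<le> (1 - \<kappa>) * scaleK \<epsilon> / 2}
          \<le> exp (- ((1 - \<kappa>)\<^sup>2 * scaleK \<epsilon> / 2))"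
    if eps: "0 < \<epsilon>" "\<epsilon> < \<epsilon>0" and LRP: "lrp_edges \<beta> M E"
    for \<epsilon> and M :: "'a measure" and E :: "'a \<Rightarrow> ((real ^ 'n) \<times> (real ^ 'n)) set"
  proof -
    interpret prob_space M using LRP by (simp add: lrp_edges_def)
    define K where "K = scaleK \<epsilon>"
    have "\<epsilon>0 \<le> 1" by (simp add: \<epsilon>0_def)
    then have e1: "\<epsilon> < 1" using eps by linarith
    have "ln \<epsilon> < ln \<epsilon>0" using eps by (simp add: \<open>\<epsilon>0 > 0\<close>)
    then have "ln \<epsilon> < - (K0^2)" by (simp add: \<epsilon>0_def)
    then have "K0^2 < ln (1 / \<epsilon>)" using eps by (simp add: ln_div)
    then have "sqrt (K0^2) < sqrt (ln (1 / \<epsilon>))" by (rule real_sqrt_less_mono)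
    then have "sqrt (K0^2) < K" by (simp add: K_def scaleK_def)
    then have KK0: "K \<ge> K0" using K04 by simp
    have K4: "K \<ge> 4" and Kp: "K \<ge> 8 / (3 * p^2)" and KA: "K \<ge> 3 * A" and KB: "K \<ge> B + 17"
      using KK0 by (auto simp: K0_def)
    define N where "N = scaleN \<theta> c1 \<epsilon>"
    have NB: "N \<ge> exp (K - B)"
      using scaleN_lower[of \<theta> c1 \<epsilon>] assms eps e1 K4 by (simp add: N_def K_def B_def)
    have "exp (K - B) \<ge> 1 + (K - B)" by (rule exp_ge_add_one_self)
    then have N17: "N \<ge> 17" using NB KB by linarith
    have N2: "scaleN \<theta> c1 \<epsilon> \<ge> 2" using N17 by (simp add: N_def)
    define Mi where "Mi = scaleM \<theta> c1 \<epsilon>"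
    define r where "r = scaler \<theta> c1 \<epsilon>"
    have Mpos: "Mi i > 0" for i using scaleM_pos[of \<theta> c1 \<epsilon> i] N2 eps assms by (simp add: Mi_def)
    have rmono: "i \<le> j \<Longrightarrow> r i \<le> r j" for i j
      using scaler_mono[of \<theta> c1 \<epsilon> i j] N2 eps assms by (simp add: r_def)
    have r0: "r i \<ge> 0" for i using rmono[of 0 i] by (simp add: r_def)
    have rstep: "i \<ge> 1 \<Longrightarrow> r i = r (i - 1) + Mi i" for i
      using scaler_step[of i \<theta> c1 \<epsilon>] by (simp add: r_def Mi_def)
    have r2M: "i \<ge> 1 \<Longrightarrow> r i \<le> 2 * Mi i" for i
      using scaler_le_2M[of \<theta> c1 \<epsilon> i] N2 eps assms by (simp add: r_def Mi_def)
    have rpred: "i \<ge> 1 \<Longrightarrow> r (i - 1) \<le> Mi i / (N - 1)" for i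
      using scaler_pred_le[of \<theta> c1 \<epsilon> i] N2 eps assms by (simp add: r_def Mi_def N_def)
    define a where "a i = r i - Mi i / 8" for i
    have a_ge: "i \<ge> 1 \<Longrightarrow> r (i - 1) \<le> a i" for i using rstep[of i] Mpos[of i] by (simp add: a_def)
    have a_lt: "a i < r i" for i using Mpos[of i] by (simp add: a_def)
    define Ann where "Ann i = ball (0::real^'n) (a i) - ball 0 (r (i - 1))" for i
    define Wc where "Wc i = - ball (0::real^'n) (r i)" for i
    define F where "F i = {\<omega> \<in> space M. connects (E \<omega>) (Ann i) (Wc i)}" for i
    define H where "H i = {\<omega> \<in> space M. connects (E \<omega>) (ball 0 (r (i - 1))) (Wc i)}" for i
    define X where "X = (\<lambda>i \<omega>. if \<omega> \<in> F i then 0 else (1::real))"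
    define K' where "K' = nat \<lfloor>K\<rfloor>"
    define I where "I = {1..K'}"
    have Wc_b: "Wc i \<in> sets lborel" for i
      unfolding Wc_def by (simp add: borel_closed closed_Compl)
    have Ann_b: "Ann i \<in> sets lborel" for i
      unfolding Ann_def by (simp add: borel_open sets.Diff)
    have ball_b: "ball (0::real^'n) s \<in> sets lborel" for s by (simp add: borel_open)
    have AW: "Ann i \<inter> Wc i = {}" for i using a_lt[of i] by (auto simp: Ann_def Wc_def)
    have Ffacts: "F i \<in> sets M \<and> (\<exists>m. 0 \<le> m \<and> m \<le> Cf \<and> prob (F i) = 1 - exp (- m))" if i: "i \<ge> 1" for i
    proof -
      have "lrp_mass \<beta> (Ann i) (Wc i) \<le> ennreal (\<beta> * cn * 16 ^ d)"
        unfolding cn_def d_def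
      proof (rule mass_bd2[where \<rho> = "Mi i / 8" and a = "a i"])
        show "0 \<le> \<beta>" using assms by simp
        show "0 < Mi i / 8" using Mpos[of i] by simp
        show "0 \<le> a i" using a_ge[OF i] r0[of "i - 1"] by simp
        show "Ann i \<subseteq> ball 0 (a i)" by (auto simp: Ann_def)
        show "Mi i / 8 \<le> norm (u - v)" if "u \<in> Ann i" "v \<in> Wc i" for u v
          using norm_gap[of u "a i" "r i" v] that by (auto simp: Ann_def Wc_def a_def)
        have "a i / (Mi i / 8) \<le> 16"
          using r2M[OF i] Mpos[of i] a_lt[of i] by (simp add: divide_le_eq a_def)
        moreover have "0 \<le> a i / (Mi i / 8)" using a_ge[OF i] r0[of "i - 1"] Mpos[of i] by simp
        ultimately show "(a i / (Mi i / 8)) ^ CARD('n) \<le> 16 ^ CARD('n)" by (intro power_mono) auto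
      qed
      then have "lrp_mass \<beta> (Ann i) (Wc i) \<le> ennreal Cf" by (simp add: Cf_def)
      moreover note AW[of i]
      ultimately show ?thesis
        using lrp_single[OF LRP Ann_b Wc_b, of i i] Cf unfolding F_def by auto
    qed
    have Hfacts: "H i \<in> sets M \<and> prob (H i) \<le> \<beta> * cn / (N - 1)" if i: "i \<ge> 1" for i
    proof -
      have N1: "N - 1 \<ge> 1" using N17 by simp
      have "lrp_mass \<beta> (ball 0 (r (i - 1))) (Wc i) \<le> ennreal (\<beta> * cn * (1 / (N - 1)))"
        unfolding cn_def
      proof (rule mass_bd2[where \<rho> = "Mi i" and a = "r (i - 1)"])
        show "0 \<le> \<beta>" using assms by simp
        show "0 < Mi i" using Mpos[of i] by simp
        show "0 \<le> r (i - 1)" by (rule r0)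
        show "ball 0 (r (i - 1)) \<subseteq> ball 0 (r (i - 1))" by simp
        show "Mi i \<le> norm (u - v)" if "u \<in> ball 0 (r (i - 1))" "v \<in> Wc i" for u v
          using norm_gap[of u "r (i - 1)" "r i" v] that rstep[OF i] by (auto simp: Wc_def)
        have q0: "0 \<le> r (i - 1) / Mi i" using r0[of "i - 1"] Mpos[of i] by simp
        have q1: "r (i - 1) / Mi i \<le> 1 / (N - 1)"
          using rpred[OF i] Mpos[of i] N1 by (simp add: divide_le_eq field_simps)
        have q2: "1 / (N - 1) \<le> 1" using N1 by simp
        have "(r (i - 1) / Mi i) ^ CARD('n) \<le> (r (i - 1) / Mi i) ^ 1"
          using q0 q1 q2 by (intro power_decreasing) (auto simp: Suc_leI)
        then show "(r (i - 1) / Mi i) ^ CARD('n) \<le> 1 / (N - 1)" using q1 by simp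
      qed
      moreover have "ball 0 (r (i - 1)) \<inter> Wc i = {}" using rmono[of "i - 1" i] by (auto simp: Wc_def)
      moreover have "0 \<le> \<beta> * cn * (1 / (N - 1))" using assms cn N1 by simp
      ultimately obtain m where "H i \<in> sets M" "0 \<le> m" "m \<le> \<beta> * cn * (1 / (N - 1))" "prob (H i) = 1 - exp (- m)"
        using lrp_single[OF LRP ball_b Wc_b, of "r (i - 1)" i] unfolding H_def by blast
      moreover have "1 - exp (- m) \<le> m" using exp_ge_add_one_self[of "- m"] by simp
      ultimately show ?thesis by simp
    qed
    have disj: "disjoint_family_on (\<lambda>j. edge_region (Ann j) (Wc j)) I"
    proof -
      have D: "edge_region (Ann i) (Wc i) \<inter> edge_region (Ann j) (Wc j) = {}" if "1 \<le> i" "i < j" for i j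
      proof (rule edge_disj[where s = "r i"])
        show "\<forall>x\<in>Ann i. norm x < r i" using a_lt[of i] by (auto simp: Ann_def)
        have "r i \<le> r (j - 1)" using that by (intro rmono) simp
        moreover have "r i \<le> r j" using that by (intro rmono) simp
        ultimately show "\<forall>x\<in>Ann j \<union> Wc j. r i \<le> norm x" by (auto simp: Ann_def Wc_def)
      qed
      show ?thesis unfolding disjoint_family_on_def
      proof (intro ballI impI)
        fix i j assume "i \<in> I" "j \<in> I" "i \<noteq> j"
        then show "edge_region (Ann i) (Wc i) \<inter> edge_region (Ann j) (Wc j) = {}"
          using D[of i j] D[of j i] by (cases "i < j") (auto simp: I_def)
      qed
    qed
    have indep: "indep_events F I"
    proof -
      have all: "\<forall>(J :: nat set) U W. finite J \<longrightarrow>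
        (\<forall>j\<in>J. U j \<in> sets lborel \<and> W j \<in> sets lborel \<and> U j \<inter> W j = {}) \<longrightarrow>
        disjoint_family_on (\<lambda>j. edge_region (U j) (W j)) J \<longrightarrow>
          (\<forall>j\<in>J. {\<omega> \<in> space M. connects (E \<omega>) (U j) (W j)} \<in> sets M \<and>
             measure M {\<omega> \<in> space M. connects (E \<omega>) (U j) (W j)} =
               (if lrp_mass \<beta> (U j) (W j) = \<infinity> then 1
                else 1 - exp (- enn2real (lrp_mass \<beta> (U j) (W j))))) \<and>
          prob_space.indep_events M (\<lambda>j. {\<omega> \<in> space M. connects (E \<omega>) (U j) (W j)}) J"
        using LRP unfolding lrp_edges_def by (rule conjunct2)
      have fI: "finite I" by (simp add: I_def)
      have hyp: "\<And>j. j \<in> I \<Longrightarrow> Ann j \<in> sets lborel \<and> Wc j \<in> sets lborel \<and> Ann j \<inter> Wc j = {}"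
        using Ann_b Wc_b AW by blast
      have "indep_events (\<lambda>j. {\<omega> \<in> space M. connects (E \<omega>) (Ann j) (Wc j)}) I"
        using all[rule_format, of I Ann Wc, OF fI hyp disj] by (rule conjunct2)
      then show ?thesis unfolding F_def .
    qed
    have Xindep: "indep_vars (\<lambda>_. borel) X I"
      using indep_vars_indicators[OF prob_space_axioms indep] unfolding X_def .
    have Xm: "X i \<in> borel_measurable M" if "i \<in> I" for i
    proof -
      have "F i \<in> sets M" using Ffacts[of i] that by (auto simp: I_def)
      then show ?thesis unfolding X_def by (intro measurable_If_set) auto
    qed
    have EX: "expectation (X i) \<ge> p" if "i \<in> I" for i
    proof -
      have i1: "i \<ge> 1" using that by (simp add: I_def)
      obtain m where m: "0 \<le> m" "m \<le> Cf" "prob (F i) = 1 - exp (- m)" and FS: "F i \<in> sets M"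
        using Ffacts[OF i1] by blast
      have "expectation (X i) = expectation (indicator (space M - F i))"
        by (intro Bochner_Integration.integral_cong) (auto simp: X_def)
      also have "\<dots> = prob ((space M - F i) \<inter> space M)" by (rule Bochner_Integration.integral_indicator)
      also have "(space M - F i) \<inter> space M = space M - F i" by blast
      also have "prob (space M - F i) = exp (- m)" using prob_compl[OF FS] m by simp
      finally show ?thesis using m by (simp add: p_def)
    qed
    define \<mu> where "\<mu> = (\<Sum>i\<in>I. expectation (X i))"
    have K'pos: "K' \<ge> 1" using K4 by (simp add: K'_def le_nat_floor)
    have K'le: "real K' \<le> K" using K4 by (simp add: K'_def)
    have K'ge: "real K' \<ge> K - 1"
    proof -
      have "real_of_int \<lfloor>K\<rfloor> > K - 1" by linarith
      moreover have "real K' = real_of_int \<lfloor>K\<rfloor>" using K4 by (simp add: K'_def)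
      ultimately show ?thesis by linarith
    qed
    have cardI: "card I = K'" by (simp add: I_def)
    define T where "T = p * K / 4"
    have Tk: "(1 - \<kappa>) * K / 2 = T" by (simp add: \<kappa>_def T_def)
    have mu_ge: "\<mu> \<ge> real K' * p"
    proof -
      have "(\<Sum>i\<in>I. p) \<le> \<mu>" unfolding \<mu>_def by (rule sum_mono) (rule EX)
      then show ?thesis using cardI by simp
    qed
    have gap: "\<mu> - T \<ge> p * K / 2"
    proof -
      have "real K' * p \<ge> (K - 1) * p" using K'ge p0 by (intro mult_right_mono) auto
      moreover have "(K - 1) * p - T \<ge> p * K / 2" using K4 p0 by (simp add: T_def field_simps)
      ultimately show ?thesis using mu_ge by linarith
    qed
    have Sset: "{\<omega> \<in> space M. (\<Sum>i\<in>I. X i \<omega>) \<le> \<mu> - (\<mu> - T)} \<in> sets M"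
    proof -
      have fm: "(\<lambda>\<omega>. \<Sum>i\<in>I. X i \<omega>) \<in> borel_measurable M" using Xm by (rule borel_measurable_sum)
      have "(\<lambda>\<omega>. \<Sum>i\<in>I. X i \<omega>) -` {..\<mu> - (\<mu> - T)} \<inter> space M \<in> sets M"
        by (rule measurable_sets[OF fm]) simp
      moreover have "(\<lambda>\<omega>. \<Sum>i\<in>I. X i \<omega>) -` {..\<mu> - (\<mu> - T)} \<inter> space M = {\<omega> \<in> space M. (\<Sum>i\<in>I. X i \<omega>) \<le> \<mu> - (\<mu> - T)}"
        by auto
      ultimately show ?thesis by simp
    qed
    have t1: "prob {\<omega> \<in> space M. (\<Sum>i\<in>I. X i \<omega>) \<le> \<mu> - (\<mu> - T)} \<le> exp (- (p^2 * K / 2))"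
    proof -
      have fI: "finite I" by (simp add: I_def)
      have Ine: "I \<noteq> {}" using K'pos by (auto simp: I_def)
      have a4: "indep_vars (\<lambda>_. borel) (\<lambda>i \<omega>. if \<omega> \<in> F i then 0 else (1::real)) I"
        using Xindep by (simp add: X_def)
      have a5: "\<mu> = (\<Sum>i\<in>I. expectation (\<lambda>\<omega>. if \<omega> \<in> F i then 0 else (1::real)))"
        by (simp add: \<mu>_def X_def)
      have "p * K / 2 \<ge> 0" using p0 K4 by simp
      then have c0: "\<mu> - T \<ge> 0" using gap by linarith
      have "measure M {x\<in>space M. (\<Sum>i\<in>I. (if x \<in> F i then 0 else (1::real))) \<le> \<mu> - (\<mu> - T)}
         \<le> exp (-2 * (\<mu> - T)\<^sup>2 / real (card I))"
        by (rule hoeff_indicator[OF prob_space_axioms fI Ine a4 a5 c0])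
      then have P1: "prob {\<omega> \<in> space M. (\<Sum>i\<in>I. X i \<omega>) \<le> \<mu> - (\<mu> - T)}
          \<le> exp (-2 * (\<mu> - T)\<^sup>2 / real K')"
        using cardI by (simp add: X_def)
      have "-2 * (\<mu> - T)\<^sup>2 / real K' \<le> - (p^2 * K / 2)"
      proof -
        have "(p * K / 2)^2 \<le> (\<mu> - T)^2" using gap p0 K4 by (intro power_mono) auto
        then have "2 * (p * K / 2)^2 / K \<le> 2 * (\<mu> - T)^2 / real K'"
          using K'le K'pos K4 by (intro frac_le) auto
        moreover have "2 * (p * K / 2)^2 / K = p^2 * K / 2" using K4 by (simp add: power2_eq_square field_simps)
        ultimately show ?thesis by simp
      qed
      then have "exp (-2 * (\<mu> - T)\<^sup>2 / real K') \<le> exp (- (p^2 * K / 2))" by simp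
      with P1 show ?thesis by linarith
    qed
    have t2: "(\<Sum>i\<in>I. prob (H i)) \<le> A / 2 * K * exp (- K)"
    proof -
      have "(\<Sum>i\<in>I. prob (H i)) \<le> (\<Sum>i\<in>I. \<beta> * cn / (N - 1))"
        by (rule sum_mono) (use Hfacts in \<open>auto simp: I_def\<close>)
      also have "\<dots> = real K' * (\<beta> * cn / (N - 1))" using cardI by simp
      also have "\<dots> \<le> K * (\<beta> * cn * 2 * exp (B - K))"
      proof (rule mult_mono)
        show "real K' \<le> K" by (rule K'le)
        have "1 / (N - 1) \<le> 2 / N" using N17 by (simp add: field_simps)
        also have "2 / N \<le> 2 / exp (K - B)" using NB N17 by (intro divide_left_mono) auto
        also have "\<dots> = 2 * exp (B - K)" by (simp add: exp_diff field_simps)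
        finally have "1 / (N - 1) \<le> 2 * exp (B - K)" .
        then have "\<beta> * cn * (1 / (N - 1)) \<le> \<beta> * cn * (2 * exp (B - K))"
          using assms cn by (intro mult_left_mono) auto
        then show "\<beta> * cn / (N - 1) \<le> \<beta> * cn * 2 * exp (B - K)" by simp
      qed (use K4 assms cn N17 in auto)
      also have "\<dots> = A / 2 * K * exp (- K)" by (simp add: A_def exp_diff exp_minus field_simps)
      finally show ?thesis .
    qed
    have incl: "{\<omega> \<in> space M. (\<Sum>i = 1..nat \<lfloor>scaleK \<epsilon>\<rfloor>. xi \<theta> c1 \<epsilon> (E \<omega>) i) \<le> (1 - \<kappa>) * scaleK \<epsilon> / 2}
        \<subseteq> {\<omega> \<in> space M. (\<Sum>i\<in>I. X i \<omega>) \<le> \<mu> - (\<mu> - T)} \<union> (\<Union>i\<in>I. H i)"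
    proof
      fix \<omega> assume w: "\<omega> \<in> {\<omega> \<in> space M. (\<Sum>i = 1..nat \<lfloor>scaleK \<epsilon>\<rfloor>. xi \<theta> c1 \<epsilon> (E \<omega>) i) \<le> (1 - \<kappa>) * scaleK \<epsilon> / 2}"
      have ws: "\<omega> \<in> space M" using w by simp
      show "\<omega> \<in> {\<omega> \<in> space M. (\<Sum>i\<in>I. X i \<omega>) \<le> \<mu> - (\<mu> - T)} \<union> (\<Union>i\<in>I. H i)"
      proof (cases "\<omega> \<in> (\<Union>i\<in>I. H i)")
        case False
        have "xi \<theta> c1 \<epsilon> (E \<omega>) i = X i \<omega>" if i: "i \<in> I" for i
        proof -
          have i1: "i \<ge> 1" using i by (simp add: I_def)
          have bu: "ball (0::real^'n) (a i) = Ann i \<union> ball 0 (r (i - 1))"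
            using a_ge[OF i1] by (auto simp: Ann_def)
          have "\<omega> \<notin> H i" using False i by auto
          then have nh: "\<not> connects (E \<omega>) (ball 0 (r (i - 1))) (Wc i)" using ws by (simp add: H_def)
          have "scaler \<theta> c1 \<epsilon> i - scaleM \<theta> c1 \<epsilon> i / 8 = a i" by (simp add: a_def r_def Mi_def)
          then have "xi \<theta> c1 \<epsilon> (E \<omega>) i = (if connects (E \<omega>) (ball 0 (a i)) (Wc i) then 0 else 1)"
            unfolding xi_def by (simp add: Wc_def r_def)
          also have "\<dots> = (if connects (E \<omega>) (Ann i) (Wc i) then 0 else 1)"
            using nh by (simp only: bu connects_Un) simp
          also have "\<dots> = X i \<omega>" using ws by (simp add: X_def F_def)
          finally show ?thesis .
        qed
        then have "(\<Sum>i = 1..nat \<lfloor>scaleK \<epsilon>\<rfloor>. xi \<theta> c1 \<epsilon> (E \<omega>) i) = (\<Sum>i\<in>I. X i \<omega>)"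
          by (simp add: I_def K'_def K_def)
        then show ?thesis using w Tk by (simp add: K_def)
      qed simp
    qed
    have HS: "H ` I \<subseteq> sets M" using Hfacts by (auto simp: I_def)
    have "measure M {\<omega> \<in> space M. (\<Sum>i = 1..nat \<lfloor>scaleK \<epsilon>\<rfloor>. xi \<theta> c1 \<epsilon> (E \<omega>) i) \<le> (1 - \<kappa>) * scaleK \<epsilon> / 2}
        \<le> prob ({\<omega> \<in> space M. (\<Sum>i\<in>I. X i \<omega>) \<le> \<mu> - (\<mu> - T)} \<union> (\<Union>i\<in>I. H i))"
      using incl Sset HS by (intro finite_measure_mono) (auto simp: I_def)
    also have "\<dots> \<le> prob {\<omega> \<in> space M. (\<Sum>i\<in>I. X i \<omega>) \<le> \<mu> - (\<mu> - T)} + prob (\<Union>i\<in>I. H i)"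
      using Sset HS by (intro measure_Un_le) (auto simp: I_def)
    also have "prob (\<Union>i\<in>I. H i) \<le> (\<Sum>i\<in>I. prob (H i))"
      using HS by (intro finite_measure_subadditive_finite) (auto simp: I_def)
    also have "prob {\<omega> \<in> space M. (\<Sum>i\<in>I. X i \<omega>) \<le> \<mu> - (\<mu> - T)} + (\<Sum>i\<in>I. prob (H i)) \<le> exp (- (p^2 * K / 8))"
      by (rule numeric_final[OF p0 p1 K4 Kp KA A0 t1 t2])
    also have "exp (- (p^2 * K / 8)) = exp (- ((1 - \<kappa>)\<^sup>2 * scaleK \<epsilon> / 2))"
      by (simp add: \<kappa>_def K_def power2_eq_square field_simps)
    finally show ?thesis by simp
  qed
  ultimately show ?thesis by blast
qed

end
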